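(* Let $A$ be the $C^*$-subalgebra of $l^\infty(\mathbb N)$ consisting of all bounded sequences $\{a_n\}_{n\in\mathbb N}$ such that $\lim_{n\to\infty}|a_{n+1}-a_n|=0$ (so $A=C(\nu\mathbb N)$, where $\nu\mathbb N$ is the Higson compactification of $\mathbb N$). Then $A$ is $C^*$-reflexive.
   Context: A $C^*$-algebra $A$ is called $C^*$-reflexive if the standard Hilbert $A$-module $H_A=l_2(A)$ (sequences $(a_i)$ in $A$ with $\sum_ia_i^*a_i$ norm convergent, inner product $\langle a,b\rangle=\sum_i a_i^*b_i$) satisfies $H_A''=H_A$, where for a Hilbert $A$-module $M$, $M'$ denotes the module of bounded $A$-module maps $M\to A$, $M''=(M')'$ (Paschke's conventions), and $M\subseteq M''$ via the canonical isometric inclusion. *)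

theory Defs
  imports Complex_Main
begin

text \<open>The C*-algebra A: bounded complex sequences with |a(n+1) - a(n)| -> 0,
  with pointwise operations, conjugation as involution, and sup norm.\<close>

definition inA :: "(nat \<Rightarrow> complex) \<Rightarrow> bool" where
  "inA a \<longleftrightarrow> (\<exists>B. \<forall>n. cmod (a n) \<le> B) \<and> (\<lambda>n. cmod (a (Suc n) - a n)) \<longlonglongrightarrow> 0"

text \<open>Sup norm (meaningful for bounded sequences).\<close>
definition supn :: "(nat \<Rightarrow> complex) \<Rightarrow> real" where
  "supn a = (SUP n. cmod (a n))"

text \<open>The standard Hilbert A-module H_A = l_2(A): sequences (x_i) in A such that
  sum_i x_i^* x_i converges in the norm of A.  x i is the i-th entry (an element of A).\<close>
definition HA :: "(nat \<Rightarrow> nat \<Rightarrow> complex) \<Rightarrow> bool" where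
  "HA x \<longleftrightarrow> (\<forall>i. inA (x i)) \<and>
     (\<exists>s. inA s \<and>
        (\<lambda>M. supn (\<lambda>n. (\<Sum>i<M. cnj (x i n) * x i n) - s n)) \<longlonglongrightarrow> 0)"

text \<open>A-valued inner product <x,y> = sum_i x_i^* y_i (computed pointwise; it agrees with
  the norm limit in A).\<close>
definition Hinner :: "(nat \<Rightarrow> nat \<Rightarrow> complex) \<Rightarrow> (nat \<Rightarrow> nat \<Rightarrow> complex) \<Rightarrow> nat \<Rightarrow> complex" where
  "Hinner x y = (\<lambda>n. \<Sum>i. cnj (x i n) * y i n)"

definition Hnorm :: "(nat \<Rightarrow> nat \<Rightarrow> complex) \<Rightarrow> real" where
  "Hnorm x = sqrt (supn (Hinner x x))"

text \<open>H_A': bounded A-module maps H_A -> A.  To identify maps agreeing on H_A,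
  we require them to vanish outside H_A (extensionality).
  Right module action on H_A: (x a)_i = x_i a.\<close>
definition Hdual :: "((nat \<Rightarrow> nat \<Rightarrow> complex) \<Rightarrow> nat \<Rightarrow> complex) \<Rightarrow> bool" where
  "Hdual f \<longleftrightarrow>
     (\<forall>x. HA x \<longrightarrow> inA (f x)) \<and>
     (\<forall>x. \<not> HA x \<longrightarrow> f x = (\<lambda>_. 0)) \<and>
     (\<forall>x y. HA x \<longrightarrow> HA y \<longrightarrow> f (\<lambda>i n. x i n + y i n) = (\<lambda>n. f x n + f y n)) \<and>
     (\<forall>x a. HA x \<longrightarrow> inA a \<longrightarrow> f (\<lambda>i n. x i n * a n) = (\<lambda>n. f x n * a n)) \<and>
     (\<exists>C. \<forall>x. HA x \<longrightarrow> supn (f x) \<le> C * Hnorm x)"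

definition dual_norm :: "((nat \<Rightarrow> nat \<Rightarrow> complex) \<Rightarrow> nat \<Rightarrow> complex) \<Rightarrow> real" where
  "dual_norm f = Sup {supn (f x) | x. HA x \<and> Hnorm x \<le> 1}"

text \<open>H_A'': bounded A-module maps H_A' -> A, where (Paschke) H_A' is a right A-module
  via (f a)(x) = a^* f(x), with pointwise addition.\<close>
definition Hbidual :: "(((nat \<Rightarrow> nat \<Rightarrow> complex) \<Rightarrow> nat \<Rightarrow> complex) \<Rightarrow> nat \<Rightarrow> complex) \<Rightarrow> bool" where
  "Hbidual F \<longleftrightarrow>
     (\<forall>f. Hdual f \<longrightarrow> inA (F f)) \<and>
     (\<forall>f g. Hdual f \<longrightarrow> Hdual g \<longrightarrow> F (\<lambda>x n. f x n + g x n) = (\<lambda>n. F f n + F g n)) \<and>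
     (\<forall>f a. Hdual f \<longrightarrow> inA a \<longrightarrow> F (\<lambda>x n. cnj (a n) * f x n) = (\<lambda>n. F f n * a n)) \<and>
     (\<exists>C. \<forall>f. Hdual f \<longrightarrow> supn (F f) \<le> C * dual_norm f)"

end

theory Submission
  imports Defs "HOL-Analysis.Analysis"
begin


lemma inA_bounded: "inA a \<Longrightarrow> \<exists>B. \<forall>n. cmod (a n) \<le> B"
  by (auto simp: inA_def)

lemma inA_tendsto0:
  assumes "a \<longlonglongrightarrow> 0" shows "inA a"
proof -
  have "bounded (range a)" using assms by (rule convergent_imp_bounded)
  then obtain B where "\<forall>n. cmod (a n) \<le> B" by (auto simp: bounded_iff)
  moreover have "(\<lambda>n. a (Suc n) - a n) \<longlonglongrightarrow> 0 - 0"
    by (intro tendsto_diff LIMSEQ_Suc assms)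
  hence "(\<lambda>n. cmod (a (Suc n) - a n)) \<longlonglongrightarrow> 0"
    using tendsto_norm_zero by fastforce
  ultimately show ?thesis unfolding inA_def by blast
qed

lemma inA_const: "inA (\<lambda>n. c)"
  by (auto simp: inA_def)

lemma inA_add: "inA a \<Longrightarrow> inA b \<Longrightarrow> inA (\<lambda>n. a n + b n)"
proof -
  assume a: "inA a" and b: "inA b"
  then obtain A B where A: "\<forall>n. cmod (a n) \<le> A" and B: "\<forall>n. cmod (b n) \<le> B"
    and da: "(\<lambda>n. cmod (a (Suc n) - a n)) \<longlonglongrightarrow> 0" and db: "(\<lambda>n. cmod (b (Suc n) - b n)) \<longlonglongrightarrow> 0"
    by (auto simp: inA_def)
  have "\<forall>n. cmod (a n + b n) \<le> A + B" using A B by (meson add_mono norm_triangle_le)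
  moreover have "(\<lambda>n. cmod (a (Suc n) + b (Suc n) - (a n + b n))) \<longlonglongrightarrow> 0"
  proof (rule Lim_null_comparison)
    show "\<forall>\<^sub>F n in sequentially. norm (cmod (a (Suc n) + b (Suc n) - (a n + b n))) \<le> cmod (a (Suc n) - a n) + cmod (b (Suc n) - b n)"
      by (intro always_eventually allI) (simp add: add_diff_add norm_triangle_ineq)
    show "(\<lambda>n. cmod (a (Suc n) - a n) + cmod (b (Suc n) - b n)) \<longlonglongrightarrow> 0"
      using tendsto_add[OF da db] by simp
  qed
  ultimately show ?thesis unfolding inA_def by blast
qed

lemma inA_mult: "inA a \<Longrightarrow> inA b \<Longrightarrow> inA (\<lambda>n. a n * b n)"
proof -
  assume a: "inA a" and b: "inA b"
  then obtain A B where A: "\<forall>n. cmod (a n) \<le> A" and B: "\<forall>n. cmod (b n) \<le> B"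
    and da: "(\<lambda>n. cmod (a (Suc n) - a n)) \<longlonglongrightarrow> 0" and db: "(\<lambda>n. cmod (b (Suc n) - b n)) \<longlonglongrightarrow> 0"
    by (auto simp: inA_def)
  have "\<forall>n. cmod (a n * b n) \<le> A * B"
  proof
    fix n
    have "0 \<le> A" using A norm_ge_zero order_trans by blast
    thus "cmod (a n * b n) \<le> A * B" unfolding norm_mult using A B by (intro mult_mono) auto
  qed
  moreover have "(\<lambda>n. cmod (a (Suc n) * b (Suc n) - a n * b n)) \<longlonglongrightarrow> 0"
  proof (rule Lim_null_comparison)
    show "\<forall>\<^sub>F n in sequentially. norm (cmod (a (Suc n) * b (Suc n) - a n * b n)) \<le> A * cmod (b (Suc n) - b n) + B * cmod (a (Suc n) - a n)"
    proof (intro always_eventually allI)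
      fix n
      have e: "a (Suc n) * b (Suc n) - a n * b n = a (Suc n) * (b (Suc n) - b n) + b n * (a (Suc n) - a n)"
        by (simp add: algebra_simps)
      have "cmod (a (Suc n) * (b (Suc n) - b n)) \<le> A * cmod (b (Suc n) - b n)"
        unfolding norm_mult using A by (intro mult_right_mono) auto
      moreover have "cmod (b n * (a (Suc n) - a n)) \<le> B * cmod (a (Suc n) - a n)"
        unfolding norm_mult using B by (intro mult_right_mono) auto
      ultimately show "norm (cmod (a (Suc n) * b (Suc n) - a n * b n)) \<le> A * cmod (b (Suc n) - b n) + B * cmod (a (Suc n) - a n)"
        unfolding e real_norm_def abs_of_nonneg[OF norm_ge_zero] by (rule order_trans[OF norm_triangle_ineq add_mono])
    qed
    show "(\<lambda>n. A * cmod (b (Suc n) - b n) + B * cmod (a (Suc n) - a n)) \<longlonglongrightarrow> 0"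
      using tendsto_add[OF tendsto_mult_right_zero[OF db, of A] tendsto_mult_right_zero[OF da, of B]] by simp
  qed
  ultimately show ?thesis unfolding inA_def by blast
qed

lemma inA_cnj: "inA a \<Longrightarrow> inA (\<lambda>n. cnj (a n))"
  unfolding inA_def by (simp flip: complex_cnj_diff)

lemma inA_neg: "inA a \<Longrightarrow> inA (\<lambda>n. - a n)"
  using inA_mult[OF inA_const[of "-1"], of a] by simp

lemma inA_diff: "inA a \<Longrightarrow> inA b \<Longrightarrow> inA (\<lambda>n. a n - b n)"
  using inA_add[OF _ inA_neg, of a b] by simp

lemma inA_sum: "finite S \<Longrightarrow> (\<And>i. i \<in> S \<Longrightarrow> inA (a i)) \<Longrightarrow> inA (\<lambda>n. \<Sum>i\<in>S. a i n)"
  by (induction S rule: finite_induct) (auto intro: inA_add simp: inA_const)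

lemma inA_ulim:
  assumes "\<And>e. e > 0 \<Longrightarrow> \<exists>a. inA a \<and> (\<forall>n. cmod (s n - a n) \<le> e)"
  shows "inA s"
proof -
  obtain a where a: "inA a" and a1: "\<forall>n. cmod (s n - a n) \<le> 1" using assms[of 1] by auto
  then obtain B where B: "\<forall>n. cmod (a n) \<le> B" by (auto simp: inA_def)
  have bd: "\<forall>n. cmod (s n) \<le> B + 1"
    using a1 B by (smt (verit) norm_triangle_ineq2)
  have "(\<lambda>n. cmod (s (Suc n) - s n)) \<longlonglongrightarrow> 0"
  proof (rule LIMSEQ_I)
    fix r :: real assume r: "r > 0"
    obtain b where b: "inA b" and b1: "\<forall>n. cmod (s n - b n) \<le> r/4" using assms[of "r/4"] r by auto
    hence "(\<lambda>n. cmod (b (Suc n) - b n)) \<longlonglongrightarrow> 0" by (auto simp: inA_def)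
    from LIMSEQ_D[OF this, of "r/4"] r obtain N where N: "\<forall>n\<ge>N. norm (cmod (b (Suc n) - b n)) < r/4"
      by auto
    have "\<forall>n\<ge>N. norm (cmod (s (Suc n) - s n)) < r"
    proof (intro allI impI)
      fix n assume "n \<ge> N"
      hence "cmod (b (Suc n) - b n) < r/4" using N by simp
      moreover have "cmod (s (Suc n) - s n) \<le> cmod (s (Suc n) - b (Suc n)) + cmod (b (Suc n) - b n) + cmod (s n - b n)"
      proof -
      have "cmod (s (Suc n) - s n) = cmod ((s (Suc n) - b (Suc n)) + (b (Suc n) - b n) - (s n - b n))" by simp
      also have "\<dots> \<le> cmod ((s (Suc n) - b (Suc n)) + (b (Suc n) - b n)) + cmod (s n - b n)" by (rule norm_triangle_ineq4)
      also have "\<dots> \<le> cmod (s (Suc n) - b (Suc n)) + cmod (b (Suc n) - b n) + cmod (s n - b n)"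
        using norm_triangle_ineq by (intro add_right_mono) blast
      finally show ?thesis .
      qed
      ultimately show "norm (cmod (s (Suc n) - s n)) < r" using r b1[rule_format, of n] b1[rule_format, of "Suc n"] by simp
    qed
    thus "\<exists>N. \<forall>n\<ge>N. norm (cmod (s (Suc n) - s n) - 0) < r" by auto
  qed
  with bd show ?thesis unfolding inA_def by blast
qed

lemma supn_ge: "(\<And>n. cmod (a n) \<le> B) \<Longrightarrow> cmod (a n) \<le> supn a"
  unfolding supn_def by (rule cSUP_upper) (auto intro!: bdd_aboveI2[where M=B])

lemma supn_ge': "inA a \<Longrightarrow> cmod (a n) \<le> supn a"
  using supn_ge inA_bounded by metis

lemma supn_le: "(\<And>n. cmod (a n) \<le> B) \<Longrightarrow> supn a \<le> B"
  unfolding supn_def by (rule cSUP_least) auto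


definition uc :: "(nat \<Rightarrow> nat \<Rightarrow> complex) \<Rightarrow> bool" where
  "uc x \<longleftrightarrow> (\<forall>e>0. \<exists>N. \<forall>n M. N \<le> M \<longrightarrow> (\<Sum>i\<in>{N..<M}. (cmod (x i n))\<^sup>2) \<le> e)"

lemma cnj_mult_self: "cnj z * z = of_real ((cmod z)\<^sup>2)"
  by (metis complex_norm_square mult.commute)

lemma sum_split_lessThan:
  fixes g :: "nat \<Rightarrow> 'a::ab_group_add"
  assumes "N \<le> M" shows "(\<Sum>i\<in>{N..<M}. g i) = (\<Sum>i<M. g i) - (\<Sum>i<N. g i)"
proof -
  have "(\<Sum>i<M. g i) = (\<Sum>i<N. g i) + (\<Sum>i\<in>{N..<M}. g i)"
    using assms by (metis atLeast0LessThan sum.atLeastLessThan_concat zero_le)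
  thus ?thesis by simp
qed

lemma uc_mono:
  assumes "uc x" "e > 0"
  shows "\<exists>N0. \<forall>N\<ge>N0. \<forall>n M. (\<Sum>i\<in>{N..<M}. (cmod (x i n))\<^sup>2) \<le> e"
proof -
  obtain N0 where N0: "\<forall>n M. N0 \<le> M \<longrightarrow> (\<Sum>i\<in>{N0..<M}. (cmod (x i n))\<^sup>2) \<le> e"
    using assms unfolding uc_def by blast
  have "(\<Sum>i\<in>{N..<M}. (cmod (x i n))\<^sup>2) \<le> e" if "N \<ge> N0" for N n M
  proof (cases "N \<le> M")
    case True
    have "(\<Sum>i\<in>{N..<M}. (cmod (x i n))\<^sup>2) \<le> (\<Sum>i\<in>{N0..<M}. (cmod (x i n))\<^sup>2)"
      using that by (intro sum_mono2) auto
    also have "\<dots> \<le> e" using N0 True that by simp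
    finally show ?thesis .
  next
    case False thus ?thesis using assms by simp
  qed
  thus ?thesis by blast
qed

lemma uc_summable: "uc x \<Longrightarrow> summable (\<lambda>i. (cmod (x i n))\<^sup>2)"
  unfolding summable_Cauchy
proof (intro allI impI)
  fix e :: real assume "uc x" "e > 0"
  then obtain N0 where N0: "\<forall>N\<ge>N0. \<forall>n M. (\<Sum>i\<in>{N..<M}. (cmod (x i n))\<^sup>2) \<le> e/2"
    using uc_mono[of x "e/2"] by auto
  have "norm (\<Sum>i\<in>{m..<k}. (cmod (x i n))\<^sup>2) < e" if "m \<ge> N0" for m k
  proof -
    have "norm (\<Sum>i\<in>{m..<k}. (cmod (x i n))\<^sup>2) = (\<Sum>i\<in>{m..<k}. (cmod (x i n))\<^sup>2)"
      by (simp add: sum_nonneg)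
    also have "\<dots> \<le> e/2" using N0 that by blast
    finally show ?thesis using \<open>e > 0\<close> by simp
  qed
  thus "\<exists>N. \<forall>m\<ge>N. \<forall>k. norm (\<Sum>i = m..<k. (cmod (x i n))\<^sup>2) < e" by blast
qed

definition tl2 :: "(nat \<Rightarrow> real) \<Rightarrow> nat \<Rightarrow> real" where
  "tl2 g N = (\<Sum>i. if N \<le> i then g i else 0)"

lemma tl2_eq:
  assumes "summable g"
  shows "summable (\<lambda>i. if N \<le> i then g i else 0)" "tl2 g N = suminf g - (\<Sum>i<N. g i)"
proof -
  have fin: "(\<lambda>i. if i < N then g i else 0) sums (\<Sum>i<N. g i)"
    by (rule sums_If_finite_set'[where A="{..<N}", simplified]) 
       (auto simp: sums_0)
  have e: "(\<lambda>i. if N \<le> i then g i else 0) = (\<lambda>i. g i - (if i < N then g i else 0))"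
    by auto
  have "(\<lambda>i. if N \<le> i then g i else 0) sums (suminf g - (\<Sum>i<N. g i))"
    unfolding e by (intro sums_diff summable_sums assms fin)
  thus "summable (\<lambda>i. if N \<le> i then g i else 0)" "tl2 g N = suminf g - (\<Sum>i<N. g i)"
    unfolding tl2_def by (auto simp: sums_iff)
qed

lemma tl2_tendsto: "summable g \<Longrightarrow> (\<lambda>N. tl2 g N) \<longlonglongrightarrow> 0"
proof -
  assume "summable g"
  hence "(\<lambda>N. suminf g - (\<Sum>i<N. g i)) \<longlonglongrightarrow> suminf g - suminf g"
    by (intro tendsto_diff tendsto_const summable_LIMSEQ)
  thus ?thesis using tl2_eq[OF \<open>summable g\<close>] by simp
qed

lemma tl2_nonneg: "summable g \<Longrightarrow> (\<And>i. g i \<ge> 0) \<Longrightarrow> tl2 g N \<ge> 0"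
  unfolding tl2_def using tl2_eq(1) by (intro suminf_nonneg) auto

lemma uc_tail:
  assumes "uc x" "e > 0"
  shows "\<exists>N0. \<forall>N\<ge>N0. \<forall>n. tl2 (\<lambda>i. (cmod (x i n))\<^sup>2) N \<le> e"
proof -
  obtain N0 where N0: "\<forall>N\<ge>N0. \<forall>n M. (\<Sum>i\<in>{N..<M}. (cmod (x i n))\<^sup>2) \<le> e"
    using uc_mono[OF assms] by auto
  have "tl2 (\<lambda>i. (cmod (x i n))\<^sup>2) N \<le> e" if "N \<ge> N0" for N n
  proof -
    have s: "summable (\<lambda>i. (cmod (x i n))\<^sup>2)" using uc_summable[OF assms(1)] .
    have "(\<lambda>M. (\<Sum>i<M. (cmod (x i n))\<^sup>2) - (\<Sum>i<N. (cmod (x i n))\<^sup>2))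
        \<longlonglongrightarrow> (\<Sum>i. (cmod (x i n))\<^sup>2) - (\<Sum>i<N. (cmod (x i n))\<^sup>2)"
      by (intro tendsto_diff tendsto_const summable_LIMSEQ s)
    moreover have "\<forall>M\<ge>N. (\<Sum>i<M. (cmod (x i n))\<^sup>2) - (\<Sum>i<N. (cmod (x i n))\<^sup>2) \<le> e"
      using N0 that by (simp add: sum_split_lessThan[symmetric])
    ultimately have "(\<Sum>i. (cmod (x i n))\<^sup>2) - (\<Sum>i<N. (cmod (x i n))\<^sup>2) \<le> e"
      by (intro LIMSEQ_le_const2) auto
    thus ?thesis using tl2_eq[OF s] by simp
  qed
  thus ?thesis by blast
qed

lemma HA_imp:
  assumes "HA x" shows "(\<forall>i. inA (x i)) \<and> uc x"
proof -
  from assms obtain s where xi: "\<forall>i. inA (x i)" and s: "inA s"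
    and L: "(\<lambda>M. supn (\<lambda>n. (\<Sum>i<M. cnj (x i n) * x i n) - s n)) \<longlonglongrightarrow> 0"
    unfolding HA_def by blast
  have P: "(\<Sum>i<M. cnj (x i n) * x i n) = of_real (\<Sum>i<M. (cmod (x i n))\<^sup>2)" for M n
    by (simp add: cnj_mult_self)
  have inP: "inA (\<lambda>n. (\<Sum>i<M. cnj (x i n) * x i n) - s n)" for M
    using xi s by (intro inA_diff inA_sum inA_mult inA_cnj) auto
  have ucx: "uc x" unfolding uc_def
  proof (intro allI impI)
    fix e :: real assume e: "e > 0"
    from LIMSEQ_D[OF L, of "e/2"] e obtain M0 where
      M0: "\<forall>M\<ge>M0. norm (supn (\<lambda>n. (\<Sum>i<M. cnj (x i n) * x i n) - s n) - 0) < e/2" by auto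
    have "(\<Sum>i\<in>{M0..<M}. (cmod (x i n))\<^sup>2) \<le> e" if "M0 \<le> M" for n M
    proof -
      have a: "cmod ((\<Sum>i<M. cnj (x i n) * x i n) - s n) < e/2"
        using supn_ge'[OF inP[of M], of n] M0 that by fastforce
      have b: "cmod ((\<Sum>i<M0. cnj (x i n) * x i n) - s n) < e/2"
        using supn_ge'[OF inP[of M0], of n] M0 by fastforce
      have "(\<Sum>i\<in>{M0..<M}. (cmod (x i n))\<^sup>2) = cmod (of_real (\<Sum>i\<in>{M0..<M}. (cmod (x i n))\<^sup>2))"
        unfolding norm_of_real by (rule abs_of_nonneg[symmetric]) (simp add: sum_nonneg)
      also have "of_real (\<Sum>i\<in>{M0..<M}. (cmod (x i n))\<^sup>2) =
          ((\<Sum>i<M. cnj (x i n) * x i n) - s n) - ((\<Sum>i<M0. cnj (x i n) * x i n) - s n)"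
        unfolding P sum_split_lessThan[OF that] by simp
      also have "cmod \<dots> \<le> cmod ((\<Sum>i<M. cnj (x i n) * x i n) - s n) + cmod ((\<Sum>i<M0. cnj (x i n) * x i n) - s n)"
        by (rule norm_triangle_ineq4)
      finally show ?thesis using a b by simp
    qed
    thus "\<exists>N. \<forall>n M. N \<le> M \<longrightarrow> (\<Sum>i = N..<M. (cmod (x i n))\<^sup>2) \<le> e" by blast
  qed
  with xi show ?thesis by blast
qed

lemma HA_intro:
  assumes xi: "\<forall>i. inA (x i)" and ucx: "uc x" shows "HA x"
proof -
  define s where "s n = complex_of_real (\<Sum>i. (cmod (x i n))\<^sup>2)" for n
  have sm: "summable (\<lambda>i. (cmod (x i n))\<^sup>2)" for n using uc_summable[OF ucx] .
  have P: "(\<Sum>i<M. cnj (x i n) * x i n) = of_real (\<Sum>i<M. (cmod (x i n))\<^sup>2)" for M n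
    by (simp add: cnj_mult_self)
  have diff: "cmod ((\<Sum>i<M. cnj (x i n) * x i n) - s n) = tl2 (\<lambda>i. (cmod (x i n))\<^sup>2) M" for M n
  proof -
    have "(\<Sum>i<M. cnj (x i n) * x i n) - s n = - of_real (tl2 (\<lambda>i. (cmod (x i n))\<^sup>2) M)"
      unfolding P s_def tl2_eq(2)[OF sm] by simp
    thus ?thesis using tl2_nonneg[OF sm] by simp
  qed
  have close: "\<exists>M0. \<forall>M\<ge>M0. \<forall>n. cmod ((\<Sum>i<M. cnj (x i n) * x i n) - s n) \<le> e" if "e > 0" for e
    using uc_tail[OF ucx that] unfolding diff by blast
  have inPs: "inA (\<lambda>n. \<Sum>i<M. cnj (x i n) * x i n)" for M
    using xi by (intro inA_sum inA_mult inA_cnj) auto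
  have sA: "inA s"
  proof (rule inA_ulim)
    fix e :: real assume "e > 0"
    then obtain M0 where "\<forall>M\<ge>M0. \<forall>n. cmod ((\<Sum>i<M. cnj (x i n) * x i n) - s n) \<le> e" using close by blast
    hence "\<forall>n. cmod (s n - (\<Sum>i<M0. cnj (x i n) * x i n)) \<le> e" by (simp add: norm_minus_commute)
    thus "\<exists>a. inA a \<and> (\<forall>n. cmod (s n - a n) \<le> e)" using inPs by blast
  qed
  have "(\<lambda>M. supn (\<lambda>n. (\<Sum>i<M. cnj (x i n) * x i n) - s n)) \<longlonglongrightarrow> 0"
  proof (rule LIMSEQ_I)
    fix r :: real assume r: "r > 0"
    then obtain M0 where M0: "\<forall>M\<ge>M0. \<forall>n. cmod ((\<Sum>i<M. cnj (x i n) * x i n) - s n) \<le> r/2"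
      using close[of "r/2"] by auto
    have "norm (supn (\<lambda>n. (\<Sum>i<M. cnj (x i n) * x i n) - s n) - 0) < r" if "M \<ge> M0" for M
    proof -
      have u: "supn (\<lambda>n. (\<Sum>i<M. cnj (x i n) * x i n) - s n) \<le> r/2"
        using M0 that by (intro supn_le) blast
      have "0 \<le> supn (\<lambda>n. (\<Sum>i<M. cnj (x i n) * x i n) - s n)"
        using supn_ge[of "\<lambda>n. (\<Sum>i<M. cnj (x i n) * x i n) - s n" "r/2" 0] M0 that
        by (meson norm_ge_zero order_trans)
      thus ?thesis using u r by simp
    qed
    thus "\<exists>no. \<forall>n\<ge>no. norm (supn (\<lambda>na. (\<Sum>i<n. cnj (x i na) * x i na) - s na) - 0) < r" by blast
  qed
  thus ?thesis unfolding HA_def using xi sA by blast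
qed

lemma HA_iff: "HA x \<longleftrightarrow> (\<forall>i. inA (x i)) \<and> uc x"
  using HA_imp HA_intro by blast


lemma HA_summ: "HA x \<Longrightarrow> summable (\<lambda>i. (cmod (x i n))\<^sup>2)"
  using HA_iff uc_summable by blast

lemma HA_fin:
  assumes "\<forall>i. inA (y i)" "\<forall>i\<ge>N. \<forall>n. y i n = 0" shows "HA y"
proof -
  have "uc y" unfolding uc_def
  proof (intro allI impI)
    fix e :: real assume "e > 0"
    have "\<forall>n M. N \<le> M \<longrightarrow> (\<Sum>i\<in>{N..<M}. (cmod (y i n))\<^sup>2) \<le> e"
      using assms(2) \<open>e > 0\<close> by simp
    thus "\<exists>N. \<forall>n M. N \<le> M \<longrightarrow> (\<Sum>i = N..<M. (cmod (y i n))\<^sup>2) \<le> e" by blast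
  qed
  thus ?thesis using assms HA_iff by blast
qed

lemma HA_zero: "HA (\<lambda>i n. 0)"
  by (rule HA_fin[of _ 0]) (auto simp: inA_const)

lemma HA_dom:
  assumes x: "HA x" and yi: "\<forall>i. inA (y i)" and c: "c \<ge> 0"
    and d: "\<forall>i n. cmod (y i n) \<le> c * cmod (x i n)"
  shows "HA y"
proof -
  have ucx: "uc x" using x HA_iff by blast
  have "uc y" unfolding uc_def
  proof (intro allI impI)
    fix e :: real assume e: "e > 0"
    have "c\<^sup>2 + 1 > 0" by (simp add: add_nonneg_pos)
    hence "e / (c\<^sup>2 + 1) > 0" using e by simp
    then obtain N where N: "\<forall>n M. N \<le> M \<longrightarrow> (\<Sum>i\<in>{N..<M}. (cmod (x i n))\<^sup>2) \<le> e / (c\<^sup>2 + 1)"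
      using ucx unfolding uc_def by blast
    have "(\<Sum>i\<in>{N..<M}. (cmod (y i n))\<^sup>2) \<le> e" if "N \<le> M" for n M
    proof -
      have "(\<Sum>i\<in>{N..<M}. (cmod (y i n))\<^sup>2) \<le> (\<Sum>i\<in>{N..<M}. c\<^sup>2 * (cmod (x i n))\<^sup>2)"
      proof (rule sum_mono)
        fix i
        have "(cmod (y i n))\<^sup>2 \<le> (c * cmod (x i n))\<^sup>2"
          using d by (intro power_mono) auto
        thus "(cmod (y i n))\<^sup>2 \<le> c\<^sup>2 * (cmod (x i n))\<^sup>2" by (simp add: power_mult_distrib)
      qed
      also have "\<dots> = c\<^sup>2 * (\<Sum>i\<in>{N..<M}. (cmod (x i n))\<^sup>2)" by (simp add: sum_distrib_left)
      also have "\<dots> \<le> c\<^sup>2 * (e / (c\<^sup>2 + 1))"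
        using N that by (intro mult_left_mono) auto
      also have "\<dots> \<le> e"
      proof -
        have "c\<^sup>2 * (e / (c\<^sup>2 + 1)) = e * (c\<^sup>2 / (c\<^sup>2 + 1))" by simp
        also have "\<dots> \<le> e * 1"
        proof (intro mult_left_mono)
          have "c\<^sup>2 + 1 > 0" by (simp add: add_nonneg_pos)
          thus "c\<^sup>2 / (c\<^sup>2 + 1) \<le> 1" by (simp add: divide_le_eq_1)
        qed (use e in auto)
        finally show ?thesis by simp
      qed
      finally show ?thesis .
    qed
    thus "\<exists>N. \<forall>n M. N \<le> M \<longrightarrow> (\<Sum>i = N..<M. (cmod (y i n))\<^sup>2) \<le> e" by blast
  qed
  thus ?thesis using yi HA_iff by blast
qed

lemma sq_add_le: "(cmod (a + b))\<^sup>2 \<le> 2 * (cmod a)\<^sup>2 + 2 * (cmod b)\<^sup>2"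
proof -
  have "(cmod (a + b))\<^sup>2 \<le> (cmod a + cmod b)\<^sup>2"
    by (intro power_mono norm_triangle_ineq) simp
  also have "\<dots> \<le> 2 * (cmod a)\<^sup>2 + 2 * (cmod b)\<^sup>2"
    using zero_le_power2[of "cmod a - cmod b"] by (simp add: power2_eq_square algebra_simps)
  finally show ?thesis .
qed

lemma HA_add:
  assumes x: "HA x" and y: "HA y"
  shows "HA (\<lambda>i n. x i n + y i n)"
proof -
  have ucx: "uc x" and ucy: "uc y" and xi: "\<forall>i. inA (x i)" and yi: "\<forall>i. inA (y i)"
    using x y HA_iff by blast+
  have "uc (\<lambda>i n. x i n + y i n)" unfolding uc_def
  proof (intro allI impI)
    fix e :: real assume e: "e > 0"
    obtain N1 where N1: "\<forall>N\<ge>N1. \<forall>n M. (\<Sum>i\<in>{N..<M}. (cmod (x i n))\<^sup>2) \<le> e/4"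
      using uc_mono[OF ucx, of "e/4"] e by auto
    obtain N2 where N2: "\<forall>N\<ge>N2. \<forall>n M. (\<Sum>i\<in>{N..<M}. (cmod (y i n))\<^sup>2) \<le> e/4"
      using uc_mono[OF ucy, of "e/4"] e by auto
    have "(\<Sum>i\<in>{max N1 N2..<M}. (cmod (x i n + y i n))\<^sup>2) \<le> e" for n M
    proof -
      have "(\<Sum>i\<in>{max N1 N2..<M}. (cmod (x i n + y i n))\<^sup>2) \<le>
          (\<Sum>i\<in>{max N1 N2..<M}. 2 * (cmod (x i n))\<^sup>2 + 2 * (cmod (y i n))\<^sup>2)"
        by (intro sum_mono sq_add_le)
      also have "\<dots> = 2 * (\<Sum>i\<in>{max N1 N2..<M}. (cmod (x i n))\<^sup>2) + 2 * (\<Sum>i\<in>{max N1 N2..<M}. (cmod (y i n))\<^sup>2)"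
        by (simp add: sum.distrib sum_distrib_left)
      also have "\<dots> \<le> 2 * (e/4) + 2 * (e/4)"
        using N1 N2 by (intro add_mono mult_left_mono) auto
      finally show ?thesis by simp
    qed
    thus "\<exists>N. \<forall>n M. N \<le> M \<longrightarrow> (\<Sum>i = N..<M. (cmod (x i n + y i n))\<^sup>2) \<le> e" by blast
  qed
  moreover have "\<forall>i. inA (\<lambda>n. x i n + y i n)" using xi yi inA_add by blast
  ultimately show ?thesis using HA_iff by blast
qed

lemma HA_bound:
  assumes x: "HA x" shows "\<exists>B. \<forall>n. (\<Sum>i. (cmod (x i n))\<^sup>2) \<le> B"
proof -
  have ucx: "uc x" and xi: "\<forall>i. inA (x i)" using x HA_iff by blast+
  have "\<forall>i. \<exists>B. \<forall>n. cmod (x i n) \<le> B" using xi inA_bounded by blast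
  then obtain Bf where Bf: "\<forall>i n. cmod (x i n) \<le> Bf i"
    using choice[of "\<lambda>i B. \<forall>n. cmod (x i n) \<le> B"] by blast
  obtain N where N: "\<forall>n. tl2 (\<lambda>i. (cmod (x i n))\<^sup>2) N \<le> 1"
    using uc_tail[OF ucx, of 1] by auto
  have "(\<Sum>i. (cmod (x i n))\<^sup>2) \<le> (\<Sum>i<N. (Bf i)\<^sup>2) + 1" for n
  proof -
    have "(\<Sum>i. (cmod (x i n))\<^sup>2) = (\<Sum>i<N. (cmod (x i n))\<^sup>2) + tl2 (\<lambda>i. (cmod (x i n))\<^sup>2) N"
      using tl2_eq(2)[OF HA_summ[OF x]] by simp
    also have "\<dots> \<le> (\<Sum>i<N. (Bf i)\<^sup>2) + 1"
      using N Bf by (intro add_mono sum_mono power_mono) auto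
    finally show ?thesis .
  qed
  thus ?thesis by blast
qed

lemma Hinner_eq: "HA x \<Longrightarrow> Hinner x x n = of_real (\<Sum>i. (cmod (x i n))\<^sup>2)"
  unfolding Hinner_def cnj_mult_self by (simp add: suminf_of_real HA_summ)

lemma Hnorm_ge:
  assumes x: "HA x" shows "sqrt (\<Sum>i. (cmod (x i n))\<^sup>2) \<le> Hnorm x"
proof -
  obtain B where B: "\<forall>n. (\<Sum>i. (cmod (x i n))\<^sup>2) \<le> B" using HA_bound[OF x] by blast
  have nn: "0 \<le> (\<Sum>i. (cmod (x i n))\<^sup>2)" for n using HA_summ[OF x] by (intro suminf_nonneg) auto
  have c: "cmod (Hinner x x n) = (\<Sum>i. (cmod (x i n))\<^sup>2)" for n
    using nn[of n] by (simp add: Hinner_eq[OF x])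
  have "cmod (Hinner x x n) \<le> supn (Hinner x x)"
    by (rule supn_ge[where B=B]) (use B c in auto)
  thus ?thesis unfolding Hnorm_def c by simp
qed

lemma Hnorm_nonneg: assumes "HA x" shows "0 \<le> Hnorm x"
proof -
  have "0 \<le> (\<Sum>i. (cmod (x i 0))\<^sup>2)" using HA_summ[OF assms] by (intro suminf_nonneg) auto
  hence "0 \<le> sqrt (\<Sum>i. (cmod (x i 0))\<^sup>2)" by simp
  thus ?thesis using Hnorm_ge[OF assms, of 0] by linarith
qed

lemma Hnorm_le:
  assumes x: "HA x" and B: "\<forall>n. (\<Sum>i. (cmod (x i n))\<^sup>2) \<le> B"
  shows "Hnorm x \<le> sqrt B"
proof -
  have nn: "0 \<le> (\<Sum>i. (cmod (x i n))\<^sup>2)" for n using HA_summ[OF x] by (intro suminf_nonneg) auto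
  have "supn (Hinner x x) \<le> B"
    by (rule supn_le) (use nn B in \<open>simp add: Hinner_eq[OF x]\<close>)
  thus ?thesis unfolding Hnorm_def by simp
qed

lemma CS:
  fixes a b :: "nat \<Rightarrow> complex"
  assumes a: "summable (\<lambda>i. (cmod (a i))\<^sup>2)" and b: "summable (\<lambda>i. (cmod (b i))\<^sup>2)"
  shows "summable (\<lambda>i. a i * b i)"
    "cmod (\<Sum>i. a i * b i) \<le> sqrt (\<Sum>i. (cmod (a i))\<^sup>2) * sqrt (\<Sum>i. (cmod (b i))\<^sup>2)"
proof -
  have le: "norm (cmod (a i * b i)) \<le> ((cmod (a i))\<^sup>2 + (cmod (b i))\<^sup>2) / 2" for i
    using zero_le_power2[of "cmod (a i) - cmod (b i)"]
    by (simp add: norm_mult power2_eq_square algebra_simps)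
  have sn: "summable (\<lambda>i. cmod (a i * b i))"
    by (rule summable_comparison_test[OF _ summable_divide[OF summable_add[OF a b]]])
       (use le in blast)
  thus "summable (\<lambda>i. a i * b i)" by (rule summable_norm_cancel)
  have "cmod (\<Sum>i. a i * b i) \<le> (\<Sum>i. cmod (a i * b i))" by (rule summable_norm[OF sn])
  also have "\<dots> \<le> sqrt (\<Sum>i. (cmod (a i))\<^sup>2) * sqrt (\<Sum>i. (cmod (b i))\<^sup>2)"
  proof (rule suminf_le_const[OF sn])
    fix K
    have "(\<Sum>i<K. cmod (a i * b i)) = (\<Sum>i<K. \<bar>cmod (a i)\<bar> * \<bar>cmod (b i)\<bar>)" by (simp add: norm_mult)
    also have "\<dots> \<le> L2_set (\<lambda>i. cmod (a i)) {..<K} * L2_set (\<lambda>i. cmod (b i)) {..<K}"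
      by (rule L2_set_mult_ineq)
    also have "\<dots> \<le> sqrt (\<Sum>i. (cmod (a i))\<^sup>2) * sqrt (\<Sum>i. (cmod (b i))\<^sup>2)"
      unfolding L2_set_def
      by (intro mult_mono real_sqrt_le_mono sum_le_suminf a b) (auto intro: sum_nonneg suminf_nonneg a)
    finally show "(\<Sum>i<K. cmod (a i * b i)) \<le> sqrt (\<Sum>i. (cmod (a i))\<^sup>2) * sqrt (\<Sum>i. (cmod (b i))\<^sup>2)" .
  qed
  finally show "cmod (\<Sum>i. a i * b i) \<le> sqrt (\<Sum>i. (cmod (a i))\<^sup>2) * sqrt (\<Sum>i. (cmod (b i))\<^sup>2)" .
qed


definition epsv :: "nat \<Rightarrow> nat \<Rightarrow> nat \<Rightarrow> complex" where
  "epsv i = (\<lambda>j m. if j = i then 1 else 0)"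

definition delta :: "nat \<Rightarrow> (nat \<Rightarrow> nat \<Rightarrow> complex) \<Rightarrow> nat \<Rightarrow> complex" where
  "delta i = (\<lambda>y m. if HA y then y i m else 0)"

definition GF :: "nat set \<Rightarrow> (nat \<Rightarrow> nat \<Rightarrow> complex) \<Rightarrow> (nat \<Rightarrow> nat \<Rightarrow> complex) \<Rightarrow> nat \<Rightarrow> complex" where
  "GF T u = (\<lambda>y m. if HA y \<and> m \<in> T then (\<Sum>i. u m i * y i m) else 0)"

lemma inA_single: "inA (\<lambda>m. if m = n then c else 0)"
proof (rule inA_tendsto0, rule LIMSEQ_I)
  fix r :: real assume "r > 0"
  thus "\<exists>no. \<forall>m\<ge>no. norm ((if m = n then c else 0) - 0) < r" by (intro exI[of _ "Suc n"]) auto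
qed

lemma term_le_suminf: "summable g \<Longrightarrow> (\<And>i. (0::real) \<le> g i) \<Longrightarrow> g i \<le> suminf g"
  using sum_le_suminf[of g "{i}"] by auto

lemma HA_mult:
  assumes x: "HA x" and a: "inA a" shows "HA (\<lambda>i n. x i n * a n)"
proof -
  obtain B where B: "\<forall>n. cmod (a n) \<le> B" using inA_bounded[OF a] by blast
  have B0: "0 \<le> B" using B norm_ge_zero order_trans by blast
  have xi: "\<forall>i. inA (x i)" using x HA_iff by blast
  show ?thesis
  proof (rule HA_dom[OF x _ B0])
    show "\<forall>i. inA (\<lambda>n. x i n * a n)" using xi a inA_mult by blast
    show "\<forall>i n. cmod (x i n * a n) \<le> B * cmod (x i n)"
    proof (intro allI)
      fix i n
      have "cmod (a n) * cmod (x i n) \<le> B * cmod (x i n)" using B by (intro mult_right_mono) auto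
      thus "cmod (x i n * a n) \<le> B * cmod (x i n)" by (simp add: norm_mult mult.commute)
    qed
  qed
qed

lemma HA_epsv: "HA (epsv i)"
  by (rule HA_fin[of _ "Suc i"]) (auto simp: epsv_def inA_const)

lemma dual_norm_le:
  assumes "\<forall>x. HA x \<longrightarrow> Hnorm x \<le> 1 \<longrightarrow> supn (f x) \<le> B"
  shows "dual_norm f \<le> B"
  unfolding dual_norm_def
proof (rule cSup_least)
  have "Hnorm (\<lambda>i n. 0) \<le> 1"
    using Hnorm_le[OF HA_zero, of 0] by simp
  thus "{supn (f x) |x. HA x \<and> Hnorm x \<le> 1} \<noteq> {}" using HA_zero by blast
qed (use assms in blast)

lemma Hdual_bound:
  assumes "Hdual f" shows "\<exists>C\<ge>0. \<forall>x. HA x \<longrightarrow> supn (f x) \<le> C * Hnorm x"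
proof -
  obtain C where C: "\<forall>x. HA x \<longrightarrow> supn (f x) \<le> C * Hnorm x" using assms unfolding Hdual_def by blast
  have "\<forall>x. HA x \<longrightarrow> supn (f x) \<le> max C 0 * Hnorm x"
  proof (intro allI impI)
    fix x assume "HA x"
    hence "C * Hnorm x \<le> max C 0 * Hnorm x" using Hnorm_nonneg by (intro mult_right_mono) auto
    thus "supn (f x) \<le> max C 0 * Hnorm x" using C \<open>HA x\<close> by auto
  qed
  thus ?thesis by (intro exI[of _ "max C 0"]) auto
qed

lemma Hdual_pt:
  assumes "Hdual f" "HA x" shows "cmod (f x m) \<le> supn (f x)"
  using assms supn_ge' unfolding Hdual_def by blast

lemma dual_norm_nonneg:
  assumes f: "Hdual f" shows "0 \<le> dual_norm f"
proof -
  obtain C where C0: "C \<ge> 0" and C: "\<forall>x. HA x \<longrightarrow> supn (f x) \<le> C * Hnorm x"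
    using Hdual_bound[OF f] by blast
  have z: "Hnorm (\<lambda>i n. 0) \<le> 1" using Hnorm_le[OF HA_zero, of 0] by simp
  have "0 \<le> supn (f (\<lambda>i n. 0))" using Hdual_pt[OF f HA_zero, of 0] norm_ge_zero order_trans by blast
  also have "supn (f (\<lambda>i n. 0)) \<le> dual_norm f"
    unfolding dual_norm_def
  proof (rule cSup_upper)
    show "supn (f (\<lambda>i n. 0)) \<in> {supn (f x) |x. HA x \<and> Hnorm x \<le> 1}" using z HA_zero by blast
    show "bdd_above {supn (f x) |x. HA x \<and> Hnorm x \<le> 1}"
    proof (rule bdd_aboveI)
      fix t assume "t \<in> {supn (f x) |x. HA x \<and> Hnorm x \<le> 1}"
      then obtain x where "HA x" "Hnorm x \<le> 1" "t = supn (f x)" by blast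
      moreover have "C * Hnorm x \<le> C * 1" using C0 \<open>Hnorm x \<le> 1\<close> by (intro mult_left_mono) auto
      ultimately show "t \<le> C" using C by fastforce
    qed
  qed
  finally show ?thesis .
qed

lemma Hdual_cmult:
  assumes f: "Hdual f" and a: "inA a"
  shows "Hdual (\<lambda>x m. cnj (a m) * f x m)"
proof -
  obtain B where B: "\<forall>n. cmod (a n) \<le> B" using inA_bounded[OF a] by blast
  have B0: "0 \<le> B" using B norm_ge_zero order_trans by blast
  obtain C where C0: "C \<ge> 0" and C: "\<forall>x. HA x \<longrightarrow> supn (f x) \<le> C * Hnorm x"
    using Hdual_bound[OF f] by blast
  have bd: "supn (\<lambda>m. cnj (a m) * f x m) \<le> (B * C) * Hnorm x" if x: "HA x" for x
  proof -
    have "supn (\<lambda>m. cnj (a m) * f x m) \<le> B * supn (f x)"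
    proof (rule supn_le)
      fix m
      have "cmod (cnj (a m) * f x m) = cmod (a m) * cmod (f x m)" by (simp add: norm_mult)
      also have "\<dots> \<le> B * supn (f x)" using B B0 Hdual_pt[OF f x] by (intro mult_mono) auto
      finally show "cmod (cnj (a m) * f x m) \<le> B * supn (f x)" .
    qed
    also have "\<dots> \<le> B * (C * Hnorm x)" using C x B0 by (intro mult_left_mono) auto
    finally show ?thesis by (simp add: mult.assoc)
  qed
  show ?thesis unfolding Hdual_def
  proof (intro conjI allI impI)
    fix x assume "HA x"
    thus "inA (\<lambda>m. cnj (a m) * f x m)" using f a unfolding Hdual_def by (intro inA_mult inA_cnj) auto
  next
    fix x assume "\<not> HA x" thus "(\<lambda>m. cnj (a m) * f x m) = (\<lambda>_. 0)" using f unfolding Hdual_def by simp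
  next
    fix x y assume "HA x" "HA y"
    thus "(\<lambda>m. cnj (a m) * f (\<lambda>i n. x i n + y i n) m) = (\<lambda>n. cnj (a n) * f x n + cnj (a n) * f y n)"
      using f unfolding Hdual_def by (simp add: distrib_left)
  next
    fix x b assume "HA x" "inA b"
    thus "(\<lambda>m. cnj (a m) * f (\<lambda>i n. x i n * b n) m) = (\<lambda>n. cnj (a n) * f x n * b n)"
      using f unfolding Hdual_def by (simp add: mult.assoc)
  next
    show "\<exists>C. \<forall>x. HA x \<longrightarrow> supn (\<lambda>m. cnj (a m) * f x m) \<le> C * Hnorm x" using bd by blast
  qed
qed

lemma Hdual_delta: "Hdual (delta i)"
  unfolding Hdual_def
proof (intro conjI allI impI)
  fix x assume "HA x" thus "inA (delta i x)" unfolding delta_def using HA_iff by auto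
next
  fix x assume "\<not> HA x" thus "delta i x = (\<lambda>_. 0)" unfolding delta_def by simp
next
  fix x y assume "HA x" "HA y"
  thus "delta i (\<lambda>i n. x i n + y i n) = (\<lambda>n. delta i x n + delta i y n)"
    unfolding delta_def using HA_add by simp
next
  fix x a assume "HA x" "inA a"
  thus "delta i (\<lambda>i n. x i n * a n) = (\<lambda>n. delta i x n * a n)"
    unfolding delta_def using HA_mult by simp
next
  have "supn (delta i x) \<le> 1 * Hnorm x" if x: "HA x" for x
  proof (rule supn_le)
    fix m
    have "(cmod (x i m))\<^sup>2 \<le> (\<Sum>j. (cmod (x j m))\<^sup>2)"
      using term_le_suminf[OF HA_summ[OF x]] by simp
    hence "cmod (x i m) \<le> sqrt (\<Sum>j. (cmod (x j m))\<^sup>2)" using real_le_rsqrt by blast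
    thus "cmod (delta i x m) \<le> 1 * Hnorm x" using Hnorm_ge[OF x, of m] x unfolding delta_def by simp
  qed
  thus "\<exists>C. \<forall>x. HA x \<longrightarrow> supn (delta i x) \<le> C * Hnorm x" by blast
qed

lemma Hdual_zero: "Hdual f \<Longrightarrow> f (\<lambda>i n. 0) = (\<lambda>n. 0)"
proof -
  assume f: "Hdual f"
  have "f (\<lambda>i n. (0::complex) + 0) = (\<lambda>n. f (\<lambda>i n. 0) n + f (\<lambda>i n. 0) n)"
    using f HA_zero unfolding Hdual_def by blast
  hence "f (\<lambda>i n. 0) = (\<lambda>n. f (\<lambda>i n. 0) n + f (\<lambda>i n. 0) n)" by simp
  hence "\<forall>n. f (\<lambda>i n. 0) n = f (\<lambda>i n. 0) n + f (\<lambda>i n. 0) n" by metis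
  thus ?thesis by auto
qed


lemma sq_if: "(cmod (if P then a else 0))\<^sup>2 = (if P then (cmod a)\<^sup>2 else 0)"
  by simp

lemma GF_pt:
  assumes sm: "summable (\<lambda>i. (cmod (v i))\<^sup>2)" and y: "HA y"
  shows "summable (\<lambda>i. v i * y i m)" "cmod (\<Sum>i. v i * y i m) \<le> sqrt (\<Sum>i. (cmod (v i))\<^sup>2) * Hnorm y"
proof -
  show "summable (\<lambda>i. v i * y i m)" using CS(1)[OF sm HA_summ[OF y]] .
  have "cmod (\<Sum>i. v i * y i m) \<le> sqrt (\<Sum>i. (cmod (v i))\<^sup>2) * sqrt (\<Sum>i. (cmod (y i m))\<^sup>2)"
    using CS(2)[OF sm HA_summ[OF y]] .
  also have "\<dots> \<le> sqrt (\<Sum>i. (cmod (v i))\<^sup>2) * Hnorm y"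
    using Hnorm_ge[OF y] suminf_nonneg[OF sm] by (intro mult_left_mono) auto
  finally show "cmod (\<Sum>i. v i * y i m) \<le> sqrt (\<Sum>i. (cmod (v i))\<^sup>2) * Hnorm y" .
qed

lemma Hdual_GF:
  assumes sm: "\<forall>m\<in>T. summable (\<lambda>i. (cmod (u m i))\<^sup>2)"
    and bd: "\<forall>m\<in>T. (\<Sum>i. (cmod (u m i))\<^sup>2) \<le> B" and B0: "0 \<le> B"
    and van: "\<forall>K. \<exists>M0. \<forall>m\<in>T. M0 \<le> m \<longrightarrow> (\<forall>i<K. u m i = 0)"
  shows "Hdual (GF T u)" "dual_norm (GF T u) \<le> sqrt B"
proof -
  have ptb: "cmod (GF T u y m) \<le> sqrt B * Hnorm y" if y: "HA y" for y m
  proof (cases "m \<in> T")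
    case True
    have "cmod (GF T u y m) \<le> sqrt (\<Sum>i. (cmod (u m i))\<^sup>2) * Hnorm y"
      using GF_pt(2)[OF sm[rule_format, OF True] y] True y unfolding GF_def by simp
    also have "\<dots> \<le> sqrt B * Hnorm y"
      using bd True Hnorm_nonneg[OF y] by (intro mult_right_mono) auto
    finally show ?thesis .
  next
    case False
    thus ?thesis using False B0 Hnorm_nonneg[OF y] unfolding GF_def by simp
  qed
  have supb: "supn (GF T u y) \<le> sqrt B * Hnorm y" if y: "HA y" for y
    using ptb[OF y] by (rule supn_le)
  have vals: "inA (GF T u y)" if y: "HA y" for y
  proof (rule inA_tendsto0, rule LIMSEQ_I)
    fix r :: real assume r: "r > 0"
    define e where "e = (r / (sqrt B + 1))\<^sup>2"
    have sB: "sqrt B + 1 > 0" using B0 by (simp add: add_nonneg_pos)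
    have e0: "e > 0" unfolding e_def using r sB by simp
    obtain K where K: "\<forall>n. tl2 (\<lambda>i. (cmod (y i n))\<^sup>2) K \<le> e"
      using uc_tail[OF _ e0, of y] y HA_iff by blast
    obtain M0 where M0: "\<forall>m\<in>T. M0 \<le> m \<longrightarrow> (\<forall>i<K. u m i = 0)" using van by blast
    have "norm (GF T u y m - 0) < r" if m: "m \<ge> M0" for m
    proof (cases "m \<in> T")
      case True
      let ?z = "\<lambda>i. if K \<le> i then y i m else 0"
      have zs: "summable (\<lambda>i. (cmod (?z i))\<^sup>2)"
        unfolding sq_if using tl2_eq(1)[OF HA_summ[OF y]] .
      have eq: "(\<Sum>i. u m i * y i m) = (\<Sum>i. u m i * ?z i)"
        using M0 True m by (intro suminf_cong) (auto simp: not_le)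
      have "cmod (GF T u y m) = cmod (\<Sum>i. u m i * ?z i)" using True y eq unfolding GF_def by simp
      also have "\<dots> \<le> sqrt (\<Sum>i. (cmod (u m i))\<^sup>2) * sqrt (\<Sum>i. (cmod (?z i))\<^sup>2)"
        by (rule CS(2)[OF sm[rule_format, OF True] zs])
      also have "\<dots> \<le> sqrt B * sqrt e"
      proof (intro mult_mono)
        show "sqrt (\<Sum>i. (cmod (u m i))\<^sup>2) \<le> sqrt B" using bd True by simp
        have "(\<Sum>i. (cmod (?z i))\<^sup>2) = tl2 (\<lambda>i. (cmod (y i m))\<^sup>2) K" unfolding sq_if tl2_def ..
        thus "sqrt (\<Sum>i. (cmod (?z i))\<^sup>2) \<le> sqrt e" using K by simp
      qed (use B0 suminf_nonneg[OF zs] in auto)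
      also have "sqrt e = r / (sqrt B + 1)" unfolding e_def using r sB by simp
      also have "sqrt B * (r / (sqrt B + 1)) < r"
      proof -
        have "sqrt B * (r / (sqrt B + 1)) = r * (sqrt B / (sqrt B + 1))" by simp
        also have "\<dots> < r * 1" using r sB by (intro mult_strict_left_mono) auto
        finally show ?thesis by simp
      qed
      finally show ?thesis by simp
    next
      case False thus ?thesis using r unfolding GF_def by simp
    qed
    thus "\<exists>no. \<forall>m\<ge>no. norm (GF T u y m - 0) < r" by blast
  qed
  show H: "Hdual (GF T u)" unfolding Hdual_def
  proof (intro conjI allI impI)
    fix x assume "HA x" thus "inA (GF T u x)" by (rule vals)
  next
    fix x assume "\<not> HA x" thus "GF T u x = (\<lambda>_. 0)" unfolding GF_def by simp
  next
    fix x y assume x: "HA x" and y: "HA y"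
    have "(\<Sum>i. u m i * (x i m + y i m)) = (\<Sum>i. u m i * x i m) + (\<Sum>i. u m i * y i m)" if "m \<in> T" for m
      using suminf_add[OF GF_pt(1)[OF sm[rule_format, OF that] x] GF_pt(1)[OF sm[rule_format, OF that] y]]
      by (simp add: distrib_left)
    thus "GF T u (\<lambda>i n. x i n + y i n) = (\<lambda>n. GF T u x n + GF T u y n)"
      unfolding GF_def using x y HA_add[OF x y] by auto
  next
    fix x a assume x: "HA x" and a: "inA a"
    have "(\<Sum>i. u m i * (x i m * a m)) = (\<Sum>i. u m i * x i m) * a m" if "m \<in> T" for m
      using suminf_mult2[OF GF_pt(1)[OF sm[rule_format, OF that] x], where c="a m"]
      by (simp add: mult.assoc)
    thus "GF T u (\<lambda>i n. x i n * a n) = (\<lambda>n. GF T u x n * a n)"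
      unfolding GF_def using x HA_mult[OF x a] by auto
  next
    show "\<exists>C. \<forall>x. HA x \<longrightarrow> supn (GF T u x) \<le> C * Hnorm x" using supb by blast
  qed
  show "dual_norm (GF T u) \<le> sqrt B"
  proof (rule dual_norm_le, intro allI impI)
    fix x assume x: "HA x" and "Hnorm x \<le> 1"
    hence "sqrt B * Hnorm x \<le> sqrt B * 1" using B0 by (intro mult_left_mono) auto
    thus "supn (GF T u x) \<le> sqrt B" using supb[OF x] by simp
  qed
qed


lemma Hdual_add: "Hdual f \<Longrightarrow> HA x \<Longrightarrow> HA y \<Longrightarrow> f (\<lambda>i n. x i n + y i n) = (\<lambda>n. f x n + f y n)"
  unfolding Hdual_def by blast

lemma Hdual_mod: "Hdual f \<Longrightarrow> HA x \<Longrightarrow> inA a \<Longrightarrow> f (\<lambda>i n. x i n * a n) = (\<lambda>n. f x n * a n)"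
  unfolding Hdual_def by blast

lemma Hdual_inA: "Hdual f \<Longrightarrow> HA x \<Longrightarrow> inA (f x)"
  unfolding Hdual_def by blast

lemma Hdual_off: "Hdual f \<Longrightarrow> \<not> HA x \<Longrightarrow> f x = (\<lambda>_. 0)"
  unfolding Hdual_def by blast

lemma HA_cut:
  assumes y: "HA y"
  shows "HA (\<lambda>i m. if P i then y i m else 0)"
proof (rule HA_dom[OF y _ order_refl[of 1, THEN order_trans[OF zero_le_one]]])
  have yi: "\<forall>i. inA (y i)" using y HA_iff by blast
  show "\<forall>i. inA (\<lambda>m. if P i then y i m else 0)"
  proof
    fix i show "inA (\<lambda>m. if P i then y i m else 0)" using yi inA_const[of 0] by (cases "P i") auto
  qed
  show "\<forall>i n. cmod (if P i then y i n else 0) \<le> 1 * cmod (y i n)" by simp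
qed

lemma f_trunc:
  assumes f: "Hdual f" and y: "HA y"
  shows "f (\<lambda>i m. if i < N then y i m else 0) = (\<lambda>m. \<Sum>i<N. f (epsv i) m * y i m)"
proof (induction N)
  case 0
  show ?case using Hdual_zero[OF f] by simp
next
  case (Suc N)
  have yi: "inA (y N)" using y HA_iff by blast
  have e: "(\<lambda>i m. if i < Suc N then y i m else 0) = (\<lambda>i m. (if i < N then y i m else 0) + epsv N i m * y N m)"
    unfolding epsv_def by (auto simp: fun_eq_iff)
  have h1: "HA (\<lambda>i m. if i < N then y i m else 0)" using HA_cut[OF y] .
  have h2: "HA (\<lambda>i m. epsv N i m * y N m)" using HA_mult[OF HA_epsv yi] .
  have "f (\<lambda>i m. (if i < N then y i m else 0) + epsv N i m * y N m)
      = (\<lambda>m. f (\<lambda>i m. if i < N then y i m else 0) m + f (\<lambda>i m. epsv N i m * y N m) m)"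
    by (rule Hdual_add[OF f h1 h2])
  also have "f (\<lambda>i m. epsv N i m * y N m) = (\<lambda>m. f (epsv N) m * y N m)"
    by (rule Hdual_mod[OF f HA_epsv yi])
  finally show ?case unfolding e Suc by simp
qed

lemma f_sums:
  assumes f: "Hdual f" and y: "HA y"
  shows "(\<lambda>i. f (epsv i) n * y i n) sums f y n"
proof -
  obtain C where C0: "C \<ge> 0" and C: "\<forall>x. HA x \<longrightarrow> supn (f x) \<le> C * Hnorm x"
    using Hdual_bound[OF f] by blast
  have ucy: "uc y" using y HA_iff by blast
  have split: "f y n = (\<Sum>i<N. f (epsv i) n * y i n) + f (\<lambda>i m. if N \<le> i then y i m else 0) n" for N
  proof -
    have e: "y = (\<lambda>i m. (if i < N then y i m else 0) + (if N \<le> i then y i m else 0))"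
    proof (intro ext)
      fix i m show "y i m = (if i < N then y i m else 0) + (if N \<le> i then y i m else 0)" by simp
    qed
    have A: "f (\<lambda>i m. (if i < N then y i m else 0) + (if N \<le> i then y i m else 0))
       = (\<lambda>m. f (\<lambda>i m. if i < N then y i m else 0) m + f (\<lambda>i m. if N \<le> i then y i m else 0) m)"
      by (rule Hdual_add[OF f HA_cut[OF y] HA_cut[OF y]])
    have B: "f y = f (\<lambda>i m. (if i < N then y i m else 0) + (if N \<le> i then y i m else 0))"
      by (rule arg_cong[where f=f, OF e])
    have "f y = (\<lambda>m. f (\<lambda>i m. if i < N then y i m else 0) m + f (\<lambda>i m. if N \<le> i then y i m else 0) m)"
      using B A by (rule trans)
    thus ?thesis unfolding f_trunc[OF f y] by simp
  qed
  show ?thesis unfolding sums_def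
  proof (rule LIMSEQ_I)
    fix r :: real assume r: "r > 0"
    define e where "e = (r / (C + 1))\<^sup>2"
    have C1: "C + 1 > 0" using C0 by simp
    have e0: "e > 0" unfolding e_def using r C1 by simp
    obtain N0 where N0: "\<forall>N\<ge>N0. \<forall>n. tl2 (\<lambda>i. (cmod (y i n))\<^sup>2) N \<le> e"
      using uc_tail[OF ucy e0] by blast
    have "norm ((\<Sum>i<N. f (epsv i) n * y i n) - f y n) < r" if N: "N \<ge> N0" for N
    proof -
      let ?z = "\<lambda>i m. if N \<le> i then y i m else 0"
      have z: "HA ?z" using HA_cut[OF y] .
      have "Hnorm ?z \<le> sqrt e"
      proof (rule Hnorm_le[OF z], rule allI)
        fix m
        have "(\<Sum>i. (cmod (?z i m))\<^sup>2) = tl2 (\<lambda>i. (cmod (y i m))\<^sup>2) N" unfolding tl2_def sq_if ..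
        thus "(\<Sum>i. (cmod (?z i m))\<^sup>2) \<le> e" using N0 N by simp
      qed
      have "norm ((\<Sum>i<N. f (epsv i) n * y i n) - f y n) = cmod (f ?z n)"
        using split[of N] by (simp add: norm_minus_commute)
      also have "\<dots> \<le> supn (f ?z)" by (rule Hdual_pt[OF f z])
      also have "\<dots> \<le> C * Hnorm ?z" using C z by blast
      also have "\<dots> \<le> C * sqrt e" using \<open>Hnorm ?z \<le> sqrt e\<close> C0 by (intro mult_left_mono)
      also have "sqrt e = r / (C + 1)" unfolding e_def using r C1 by simp
      also have "C * (r / (C + 1)) < r"
      proof -
        have "C * (r / (C + 1)) = r * (C / (C + 1))" by simp
        also have "\<dots> < r * 1" using r C1 by (intro mult_strict_left_mono) auto
        finally show ?thesis by simp
      qed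
      finally show ?thesis .
    qed
    thus "\<exists>no. \<forall>N\<ge>no. norm ((\<Sum>i<N. f (epsv i) n * y i n) - f y n) < r" by blast
  qed
qed

lemma sums_fin_lessThan:
  fixes g :: "nat \<Rightarrow> 'a::{t2_space,topological_comm_monoid_add}"
  shows "(\<lambda>i. if i < N then g i else 0) sums (\<Sum>i<N. g i)"
  using sums_If_finite_set[of "{..<N}" g] by simp

lemma mult_cnj_self': "z * cnj z = of_real ((cmod z)\<^sup>2)"
  by (metis complex_norm_square)

lemma phi_bound:
  assumes f: "Hdual f" and C0: "C \<ge> 0" and C: "\<forall>x. HA x \<longrightarrow> supn (f x) \<le> C * Hnorm x"
  shows "summable (\<lambda>i. (cmod (f (epsv i) n))\<^sup>2)" "(\<Sum>i. (cmod (f (epsv i) n))\<^sup>2) \<le> C\<^sup>2"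
proof -
  let ?phi = "\<lambda>i m. f (epsv i) m"
  have fin: "(\<Sum>i<N. (cmod (?phi i n))\<^sup>2) \<le> C\<^sup>2" for N
  proof -
    define y where "y = (\<lambda>i m. if i < N then cnj (?phi i m) else 0)"
    have yA: "\<forall>i. inA (y i)"
    proof
      fix i show "inA (y i)" unfolding y_def
        using Hdual_inA[OF f HA_epsv] inA_const[of 0] inA_cnj by (cases "i < N") auto
    qed
    have y: "HA y" by (rule HA_fin[OF yA, of N]) (auto simp: y_def)
    define P where "P m = (\<Sum>i<N. (cmod (?phi i m))\<^sup>2)" for m
    have fy: "f y m = of_real (P m)" for m
    proof -
      have "(\<lambda>i. ?phi i m * y i m) = (\<lambda>i. if i < N then of_real ((cmod (?phi i m))\<^sup>2) else 0)"
      proof (intro ext)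
        fix i show "?phi i m * y i m = (if i < N then of_real ((cmod (?phi i m))\<^sup>2) else 0)"
          unfolding y_def by (cases "i < N") (simp_all only: mult_cnj_self' if_True if_False mult_zero_right)
      qed
      hence "(\<lambda>i. if i < N then complex_of_real ((cmod (?phi i m))\<^sup>2) else 0) sums f y m"
        using f_sums[OF f y, of m] by simp
      moreover have "(\<lambda>i. if i < N then complex_of_real ((cmod (?phi i m))\<^sup>2) else 0) sums of_real (P m)"
        unfolding P_def of_real_sum using sums_fin_lessThan .
      ultimately show ?thesis using sums_unique2 by blast
    qed
    have hy: "Hinner y y = f y"
    proof
      fix m
      have "(\<lambda>i. (cmod (y i m))\<^sup>2) = (\<lambda>i. if i < N then (cmod (?phi i m))\<^sup>2 else 0)"
        unfolding y_def by (auto simp: fun_eq_iff)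
      hence "(\<Sum>i. (cmod (y i m))\<^sup>2) = (\<Sum>i. if i < N then (cmod (?phi i m))\<^sup>2 else 0)"
        by simp
      also have "\<dots> = P m" unfolding P_def by (rule sums_unique[OF sums_fin_lessThan, symmetric])
      finally have "(\<Sum>i. (cmod (y i m))\<^sup>2) = P m" .
      thus "Hinner y y m = f y m" using Hinner_eq[OF y] fy by simp
    qed
    have Pnn: "0 \<le> P m" for m unfolding P_def by (simp add: sum_nonneg)
    let ?S = "supn (f y)"
    have "P n \<le> ?S" using Hdual_pt[OF f y, of n] fy Pnn by simp
    have S0: "0 \<le> ?S" using \<open>P n \<le> ?S\<close> Pnn[of n] by linarith
    have "?S \<le> C * Hnorm y" using C y by blast
    hence "?S \<le> C * sqrt ?S" unfolding Hnorm_def hy .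
    have "?S \<le> C\<^sup>2"
    proof (cases "?S = 0")
      case True thus ?thesis by simp
    next
      case False
      hence pos: "sqrt ?S > 0" using S0 by simp
      have "sqrt ?S * sqrt ?S = ?S" using S0 by simp
      hence "sqrt ?S * sqrt ?S \<le> C * sqrt ?S" using \<open>?S \<le> C * sqrt ?S\<close> by linarith
      hence "sqrt ?S \<le> C" using pos by (rule mult_right_le_imp_le)
      hence "(sqrt ?S)\<^sup>2 \<le> C\<^sup>2" using pos by (intro power_mono) auto
      thus ?thesis using S0 by simp
    qed
    thus ?thesis using \<open>P n \<le> ?S\<close> unfolding P_def by simp
  qed
  show sm: "summable (\<lambda>i. (cmod (f (epsv i) n))\<^sup>2)"
  proof (rule bounded_imp_summable[where B="C\<^sup>2"])
    fix N show "(\<Sum>k\<le>N. (cmod (f (epsv k) n))\<^sup>2) \<le> C\<^sup>2"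
      using fin[of "Suc N"] unfolding lessThan_Suc_atMost .
  qed simp
  show "(\<Sum>i. (cmod (f (epsv i) n))\<^sup>2) \<le> C\<^sup>2"
    by (rule suminf_le_const[OF sm fin])
qed


lemma sq_trick:
  fixes S C :: real
  assumes S0: "0 \<le> S" and le: "S \<le> C * sqrt S" and C0: "0 \<le> C"
  shows "S \<le> C\<^sup>2"
proof (cases "S = 0")
  case True thus ?thesis by simp
next
  case False
  hence pos: "sqrt S > 0" using S0 by simp
  have "sqrt S * sqrt S = S" using S0 by simp
  hence "sqrt S * sqrt S \<le> C * sqrt S" using le by linarith
  hence "sqrt S \<le> C" using pos by (rule mult_right_le_imp_le)
  hence "(sqrt S)\<^sup>2 \<le> C\<^sup>2" using pos by (intro power_mono) auto
  thus ?thesis using S0 by simp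
qed

lemma Hbidual_inA: "Hbidual F \<Longrightarrow> Hdual f \<Longrightarrow> inA (F f)"
  unfolding Hbidual_def by blast

lemma Hbidual_add: "Hbidual F \<Longrightarrow> Hdual f \<Longrightarrow> Hdual g \<Longrightarrow> F (\<lambda>x n. f x n + g x n) = (\<lambda>n. F f n + F g n)"
  unfolding Hbidual_def by blast

lemma Hbidual_mod: "Hbidual F \<Longrightarrow> Hdual f \<Longrightarrow> inA a \<Longrightarrow> F (\<lambda>x n. cnj (a n) * f x n) = (\<lambda>n. F f n * a n)"
  unfolding Hbidual_def by blast

lemma Hbidual_bound:
  assumes F: "Hbidual F"
  shows "\<exists>D\<ge>0. \<forall>f. Hdual f \<longrightarrow> (\<forall>m. cmod (F f m) \<le> D * dual_norm f)"
proof -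
  obtain D where D: "\<forall>f. Hdual f \<longrightarrow> supn (F f) \<le> D * dual_norm f" using F unfolding Hbidual_def by blast
  have "\<forall>f. Hdual f \<longrightarrow> (\<forall>m. cmod (F f m) \<le> max D 0 * dual_norm f)"
  proof (intro allI impI)
    fix f m assume f: "Hdual f"
    have "cmod (F f m) \<le> supn (F f)" using supn_ge'[OF Hbidual_inA[OF F f]] .
    also have "\<dots> \<le> D * dual_norm f" using D f by blast
    also have "\<dots> \<le> max D 0 * dual_norm f" using dual_norm_nonneg[OF f] by (intro mult_right_mono) auto
    finally show "cmod (F f m) \<le> max D 0 * dual_norm f" .
  qed
  thus ?thesis by (intro exI[of _ "max D 0"]) auto
qed

lemma FK:
  assumes F: "Hbidual F" and D0: "D \<ge> 0" and D: "\<forall>f. Hdual f \<longrightarrow> (\<forall>m. cmod (F f m) \<le> D * dual_norm f)"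
    and v: "summable (\<lambda>i. (cmod (v i))\<^sup>2)"
  shows "(\<lambda>i. F (delta i) n * cnj (v i)) sums F (GF {n} (\<lambda>m i. v i)) n"
proof -
  define u where "u N = (\<lambda>(m::nat) i. if N \<le> i then v i else 0)" for N
  define G where "G N = GF {n} (u N)" for N
  have usq: "(\<lambda>i. (cmod (u N m i))\<^sup>2) = (\<lambda>i. if N \<le> i then (cmod (v i))\<^sup>2 else 0)" for N m
    unfolding u_def by (auto simp: fun_eq_iff)
  have usm: "summable (\<lambda>i. (cmod (u N m i))\<^sup>2)" for N m
    unfolding usq using tl2_eq(1)[OF v] .
  have GH: "Hdual (G N) \<and> dual_norm (G N) \<le> sqrt (tl2 (\<lambda>i. (cmod (v i))\<^sup>2) N)" for N
  proof -
    have "\<forall>m\<in>{n}. (\<Sum>i. (cmod (u N m i))\<^sup>2) \<le> tl2 (\<lambda>i. (cmod (v i))\<^sup>2) N"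
      unfolding usq tl2_def by simp
    moreover have "\<forall>K. \<exists>M0. \<forall>m\<in>{n}. M0 \<le> m \<longrightarrow> (\<forall>i<K. u N m i = 0)"
      by (intro allI exI[of _ "Suc n"]) auto
    ultimately show ?thesis unfolding G_def
      using Hdual_GF[of "{n}" "u N" "tl2 (\<lambda>i. (cmod (v i))\<^sup>2) N"] usm tl2_nonneg[OF v] by auto
  qed
  define a where "a N = (\<lambda>m. if m = n then cnj (v N) else 0)" for N
  have aA: "inA (a N)" for N unfolding a_def by (rule inA_single)
  have dH: "Hdual (\<lambda>y m. cnj (a N m) * delta N y m)" for N
    by (rule Hdual_cmult[OF Hdual_delta aA])
  have rec: "G N = (\<lambda>y m. G (Suc N) y m + cnj (a N m) * delta N y m)" for N
  proof (intro ext)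
    fix y m
    show "G N y m = G (Suc N) y m + cnj (a N m) * delta N y m"
    proof (cases "HA y \<and> m = n")
      case True
      hence y: "HA y" and m: "m = n" by auto
      have pt: "u N n i * y i n = u (Suc N) n i * y i n + (if i = N then v N * y N n else 0)" for i
        unfolding u_def by auto
      have "(\<Sum>i. u N n i * y i n) = (\<Sum>i. u (Suc N) n i * y i n) + (\<Sum>i. if i = N then v N * y N n else 0)"
        unfolding pt by (rule suminf_add[OF GF_pt(1)[OF usm y] summable_single, symmetric])
      also have "(\<Sum>i. if i = N then v N * y N n else 0) = v N * y N n"
        using sums_unique[OF sums_single[of N "\<lambda>_. v N * y N n"]] by simp
      finally show ?thesis using y m unfolding G_def GF_def a_def delta_def by simp
    next
      case False
      have "G N y m = 0" "G (Suc N) y m = 0" using False unfolding G_def GF_def by auto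
      moreover have "cnj (a N m) * delta N y m = 0" using False unfolding a_def delta_def by auto
      ultimately show ?thesis by simp
    qed
  qed
  have step: "F (G N) n = F (G (Suc N)) n + F (delta N) n * cnj (v N)" for N
  proof -
    have "F (G N) = (\<lambda>m. F (G (Suc N)) m + F (\<lambda>y m. cnj (a N m) * delta N y m) m)"
      unfolding rec[of N] by (rule Hbidual_add[OF F conjunct1[OF GH] dH])
    also have "F (\<lambda>y m. cnj (a N m) * delta N y m) = (\<lambda>m. F (delta N) m * a N m)"
      by (rule Hbidual_mod[OF F Hdual_delta aA])
    finally show ?thesis unfolding a_def by simp
  qed
  have ind: "F (G 0) n = (\<Sum>i<N. F (delta i) n * cnj (v i)) + F (G N) n" for N
  proof (induction N)
    case 0 show ?case by simp
  next
    case (Suc N)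
    have "F (G 0) n = (\<Sum>i<N. F (delta i) n * cnj (v i)) + F (G N) n" by (rule Suc)
    also have "F (G N) n = F (G (Suc N)) n + F (delta N) n * cnj (v N)" by (rule step)
    finally show ?case by (simp add: algebra_simps)
  qed
  have G0: "G 0 = GF {n} (\<lambda>m i. v i)" unfolding G_def u_def by simp
  have small: "(\<lambda>N. F (G N) n) \<longlonglongrightarrow> 0"
  proof (rule Lim_null_comparison)
    show "\<forall>\<^sub>F N in sequentially. norm (F (G N) n) \<le> D * sqrt (tl2 (\<lambda>i. (cmod (v i))\<^sup>2) N)"
    proof (intro always_eventually allI)
      fix N
      have "norm (F (G N) n) \<le> D * dual_norm (G N)" using D GH by blast
      also have "\<dots> \<le> D * sqrt (tl2 (\<lambda>i. (cmod (v i))\<^sup>2) N)" using GH D0 by (intro mult_left_mono) auto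
      finally show "norm (F (G N) n) \<le> D * sqrt (tl2 (\<lambda>i. (cmod (v i))\<^sup>2) N)" .
    qed
    have "(\<lambda>N. sqrt (tl2 (\<lambda>i. (cmod (v i))\<^sup>2) N)) \<longlonglongrightarrow> sqrt 0"
      by (intro tendsto_real_sqrt tl2_tendsto v)
    thus "(\<lambda>N. D * sqrt (tl2 (\<lambda>i. (cmod (v i))\<^sup>2) N)) \<longlonglongrightarrow> 0"
      using tendsto_mult_right_zero by fastforce
  qed
  have "(\<lambda>N. F (G 0) n - F (G N) n) \<longlonglongrightarrow> F (G 0) n - 0"
    by (intro tendsto_diff tendsto_const small)
  moreover have "(\<lambda>N. F (G 0) n - F (G N) n) = (\<lambda>N. \<Sum>i<N. F (delta i) n * cnj (v i))"
  proof (intro ext)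
    fix N show "F (G 0) n - F (G N) n = (\<Sum>i<N. F (delta i) n * cnj (v i))"
      using ind[of N] by simp
  qed
  ultimately have "(\<lambda>N. \<Sum>i<N. F (delta i) n * cnj (v i)) \<longlonglongrightarrow> F (G 0) n"
    by simp
  thus ?thesis unfolding sums_def G0 .
qed

lemma LOC:
  assumes F: "Hbidual F" and D0: "D \<ge> 0" and D: "\<forall>f. Hdual f \<longrightarrow> (\<forall>m. cmod (F f m) \<le> D * dual_norm f)"
    and v: "summable (\<lambda>i. (cmod (v i))\<^sup>2)" and g: "Hdual g"
    and gv: "\<forall>y. HA y \<longrightarrow> g y n = (\<Sum>i. v i * y i n)"
  shows "(\<lambda>i. F (delta i) n * cnj (v i)) sums F g n"
proof -
  define e where "e = (\<lambda>m::nat. if m = n then (1::complex) else 0)"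
  have eA: "inA e" unfolding e_def by (rule inA_single)
  have A: "F (\<lambda>y m. cnj (e m) * g y m) = (\<lambda>m. F g m * e m)" by (rule Hbidual_mod[OF F g eA])
  have B: "(\<lambda>y m. cnj (e m) * g y m) = GF {n} (\<lambda>m i. v i)"
  proof (intro ext)
    fix y m show "cnj (e m) * g y m = GF {n} (\<lambda>m i. v i) y m"
      using gv Hdual_off[OF g, of y] unfolding e_def GF_def by auto
  qed
  have "F (GF {n} (\<lambda>m i. v i)) = (\<lambda>m. F g m * e m)" using A unfolding B .
  hence "F (GF {n} (\<lambda>m i. v i)) n = F g n * e n" by (rule fun_cong)
  hence "F (GF {n} (\<lambda>m i. v i)) n = F g n" unfolding e_def by simp
  thus ?thesis using FK[OF F D0 D v, of n] by simp
qed

lemma wbound: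
  assumes F: "Hbidual F" and D0: "D \<ge> 0" and D: "\<forall>f. Hdual f \<longrightarrow> (\<forall>m. cmod (F f m) \<le> D * dual_norm f)"
  shows "summable (\<lambda>i. (cmod (F (delta i) n))\<^sup>2)" "(\<Sum>i. (cmod (F (delta i) n))\<^sup>2) \<le> D\<^sup>2"
proof -
  have fin: "(\<Sum>i<N. (cmod (F (delta i) n))\<^sup>2) \<le> D\<^sup>2" for N
  proof -
    define v where "v = (\<lambda>i. if i < N then F (delta i) n else 0)"
    define P where "P = (\<Sum>i<N. (cmod (F (delta i) n))\<^sup>2)"
    have vsq: "(\<lambda>i. (cmod (v i))\<^sup>2) = (\<lambda>i. if i < N then (cmod (F (delta i) n))\<^sup>2 else 0)"
      unfolding v_def by (auto simp: fun_eq_iff)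
    have vs: "(\<lambda>i. (cmod (v i))\<^sup>2) sums P" unfolding vsq P_def by (rule sums_fin_lessThan)
    have P0: "0 \<le> P" unfolding P_def by (simp add: sum_nonneg)
    have van: "\<forall>K. \<exists>M0. \<forall>m\<in>{n}. M0 \<le> m \<longrightarrow> (\<forall>i<K. (\<lambda>m i. v i) m i = 0)"
      by (intro allI exI[of _ "Suc n"]) auto
    have sm1: "\<forall>m\<in>{n}. summable (\<lambda>i. (cmod ((\<lambda>m i. v i) m i))\<^sup>2)" using sums_summable[OF vs] by simp
    have bd1: "\<forall>m\<in>{n}. (\<Sum>i. (cmod ((\<lambda>m i. v i) m i))\<^sup>2) \<le> P" using sums_unique[OF vs] by simp
    have gH: "Hdual (GF {n} (\<lambda>m i. v i))" "dual_norm (GF {n} (\<lambda>m i. v i)) \<le> sqrt P"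
      using Hdual_GF[OF sm1 bd1 P0 van] by auto
    have ser: "(\<lambda>i. F (delta i) n * cnj (v i)) = (\<lambda>i. if i < N then of_real ((cmod (F (delta i) n))\<^sup>2) else 0)"
    proof (intro ext)
      fix i show "F (delta i) n * cnj (v i) = (if i < N then of_real ((cmod (F (delta i) n))\<^sup>2) else 0)"
        unfolding v_def by (cases "i < N") (simp_all only: mult_cnj_self' if_True if_False complex_cnj_zero mult_zero_right)
    qed
    have "(\<lambda>i. F (delta i) n * cnj (v i)) sums F (GF {n} (\<lambda>m i. v i)) n"
      by (rule FK[OF F D0 D sums_summable[OF vs]])
    moreover have "(\<lambda>i. F (delta i) n * cnj (v i)) sums of_real P"
      unfolding ser P_def of_real_sum by (rule sums_fin_lessThan)
    ultimately have eq: "F (GF {n} (\<lambda>m i. v i)) n = of_real P" using sums_unique2 by blast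
    have "P = cmod (F (GF {n} (\<lambda>m i. v i)) n)" using eq P0 by simp
    also have "\<dots> \<le> D * dual_norm (GF {n} (\<lambda>m i. v i))" using D gH by blast
    also have "\<dots> \<le> D * sqrt P" using gH D0 by (intro mult_left_mono) auto
    finally show ?thesis using sq_trick[OF P0 _ D0] unfolding P_def by blast
  qed
  show sm: "summable (\<lambda>i. (cmod (F (delta i) n))\<^sup>2)"
  proof (rule bounded_imp_summable[where B="D\<^sup>2"])
    fix N show "(\<Sum>k\<le>N. (cmod (F (delta k) n))\<^sup>2) \<le> D\<^sup>2"
      using fin[of "Suc N"] unfolding lessThan_Suc_atMost .
  qed simp
  show "(\<Sum>i. (cmod (F (delta i) n))\<^sup>2) \<le> D\<^sup>2"
    by (rule suminf_le_const[OF sm fin])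
qed


lemma seg_le_tl2:
  assumes g: "summable g" and nn: "\<And>i. (0::real) \<le> g i" and NM: "N \<le> M"
  shows "(\<Sum>i\<in>{N..<M}. g i) \<le> tl2 g N"
proof -
  have "(\<Sum>i<M. g i) \<le> suminf g" using sum_le_suminf[OF g, of "{..<M}"] nn by auto
  thus ?thesis unfolding sum_split_lessThan[OF NM] tl2_eq(2)[OF g] by simp
qed

lemma unif_tail:
  assumes F: "Hbidual F" and D0: "D \<ge> 0" and D: "\<forall>f. Hdual f \<longrightarrow> (\<forall>m. cmod (F f m) \<le> D * dual_norm f)"
    and e: "e > 0"
  shows "\<exists>N0. \<forall>m. tl2 (\<lambda>i. (cmod (F (delta i) m))\<^sup>2) N0 \<le> e"
proof (rule ccontr)
  define t where "t m = (\<lambda>i. (cmod (F (delta i) m))\<^sup>2)" for m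
  have tsm: "summable (t m)" for m unfolding t_def using wbound(1)[OF F D0 D] .
  have tnn: "0 \<le> t m i" for m i unfolding t_def by simp
  have tbd: "suminf (t m) \<le> D\<^sup>2" for m unfolding t_def using wbound(2)[OF F D0 D] .
  assume "\<not> (\<exists>N0. \<forall>m. tl2 (\<lambda>i. (cmod (F (delta i) m))\<^sup>2) N0 \<le> e)"
  hence big: "\<forall>N. \<exists>m. tl2 (t m) N > e" unfolding t_def by (simp add: not_le)
  have pairs: "\<exists>p. fst p > L \<and> snd p \<ge> L \<and> tl2 (t (fst p)) (snd p) > e" for L
  proof -
    have "\<forall>m'\<in>{..L}. eventually (\<lambda>K. tl2 (t m') K < e) sequentially"
      using tl2_tendsto[OF tsm] e by (auto intro: order_tendstoD)
    hence "eventually (\<lambda>K. \<forall>m'\<in>{..L}. tl2 (t m') K < e) sequentially"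
      by (intro eventually_ball_finite) auto
    then obtain K1 where K1: "\<forall>K\<ge>K1. \<forall>m'\<in>{..L}. tl2 (t m') K < e"
      unfolding eventually_sequentially by blast
    obtain m where m: "tl2 (t m) (max K1 L) > e" using big by blast
    have "m > L"
    proof (rule ccontr)
      assume "\<not> m > L"
      hence "m \<in> {..L}" by simp
      hence "tl2 (t m) (max K1 L) < e" using K1 by simp
      thus False using m by simp
    qed
    thus ?thesis using m by (intro exI[of _ "(m, max K1 L)"]) auto
  qed
  define ch where "ch L = (SOME p. fst p > L \<and> snd p \<ge> L \<and> tl2 (t (fst p)) (snd p) > e)" for L
  have ch: "fst (ch L) > L \<and> snd (ch L) \<ge> L \<and> tl2 (t (fst (ch L))) (snd (ch L)) > e" for L
    unfolding ch_def using someI_ex[OF pairs[of L]] .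
  define q where "q = rec_nat (ch 0) (\<lambda>j p. ch (fst p + 1 + j))"
  have q0: "q 0 = ch 0" unfolding q_def by simp
  have qS: "q (Suc j) = ch (fst (q j) + 1 + j)" for j unfolding q_def by simp
  define mm where "mm j = fst (q j)" for j
  define KK where "KK j = snd (q j)" for j
  have mmS: "mm (Suc j) > mm j + 1" for j unfolding mm_def qS using ch by (meson add_lessD1 less_add_one)
  have KKj: "KK j \<ge> j" for j
  proof (cases j)
    case 0 thus ?thesis by simp
  next
    case (Suc j')
    have "snd (ch (fst (q j') + 1 + j')) \<ge> fst (q j') + 1 + j'" using ch by blast
    thus ?thesis unfolding KK_def Suc qS by simp
  qed
  have tlj: "tl2 (t (mm j)) (KK j) > e" for j
  proof (cases j)
    case 0 thus ?thesis using ch[of 0] by (simp add: mm_def KK_def q0)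
  next
    case (Suc j') thus ?thesis using ch[of "fst (q j') + 1 + j'"] by (simp add: mm_def KK_def qS)
  qed
  have smm: "strict_mono mm" unfolding strict_mono_Suc_iff using mmS by (simp add: less_imp_le Suc_lessD)
  have injmm: "inj mm" using strict_mono_imp_inj_on[OF smm] .
  define S where "S = range mm"
  define Nf where "Nf m = KK (inv mm m)" for m
  have Nfmm: "Nf (mm j) = KK j" for j unfolding Nf_def using inv_f_f[OF injmm] by simp
  define u where "u m i = (if Nf m \<le> i then F (delta i) m else 0)" for m i
  have usq: "(\<lambda>i. (cmod (u m i))\<^sup>2) = (\<lambda>i. if Nf m \<le> i then t m i else 0)" for m
    unfolding u_def t_def by (auto simp: fun_eq_iff)
  have usm: "summable (\<lambda>i. (cmod (u m i))\<^sup>2)" for m unfolding usq by (rule tl2_eq(1)[OF tsm])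
  have ubd: "(\<Sum>i. (cmod (u m i))\<^sup>2) \<le> D\<^sup>2" for m
  proof -
    have "(\<Sum>i. (cmod (u m i))\<^sup>2) \<le> suminf (t m)"
      using usm tsm tnn unfolding usq by (intro suminf_le) auto
    thus ?thesis using tbd[of m] by simp
  qed
  have van: "\<forall>K. \<exists>M0. \<forall>m\<in>S. M0 \<le> m \<longrightarrow> (\<forall>i<K. u m i = 0)"
  proof (intro allI)
    fix K show "\<exists>M0. \<forall>m\<in>S. M0 \<le> m \<longrightarrow> (\<forall>i<K. u m i = 0)"
    proof (intro exI[of _ "mm K"] ballI impI allI)
      fix m i assume "m \<in> S" "mm K \<le> m" "i < K"
      then obtain j where j: "m = mm j" unfolding S_def by blast
      have "K \<le> j" using \<open>mm K \<le> m\<close> unfolding j using strict_mono_less_eq[OF smm] by blast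
      hence "i < Nf m" using \<open>i < K\<close> KKj[of j] unfolding j Nfmm by linarith
      thus "u m i = 0" unfolding u_def by simp
    qed
  qed
  have gH: "Hdual (GF S u)"
    using Hdual_GF(1)[of S u "D\<^sup>2"] usm ubd van by auto
  have FA: "inA (F (GF S u))" by (rule Hbidual_inA[OF F gH])
  have onS: "F (GF S u) (mm j) = of_real (tl2 (t (mm j)) (KK j))" for j
  proof -
    let ?m = "mm j"
    have "(\<lambda>i. F (delta i) ?m * cnj (u ?m i)) sums F (GF S u) ?m"
    proof (rule LOC[OF F D0 D usm gH])
      show "\<forall>y. HA y \<longrightarrow> GF S u y ?m = (\<Sum>i. u ?m i * y i ?m)" unfolding GF_def S_def by simp
    qed
    moreover have "(\<lambda>i. F (delta i) ?m * cnj (u ?m i)) = (\<lambda>i. of_real (if Nf ?m \<le> i then t ?m i else 0))"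
    proof (intro ext)
      fix i show "F (delta i) ?m * cnj (u ?m i) = of_real (if Nf ?m \<le> i then t ?m i else 0)"
        unfolding u_def t_def by (cases "Nf ?m \<le> i") (simp_all only: mult_cnj_self' if_True if_False complex_cnj_zero mult_zero_right of_real_0)
    qed
    moreover have "(\<lambda>i. complex_of_real (if Nf ?m \<le> i then t ?m i else 0)) sums of_real (tl2 (t ?m) (Nf ?m))"
      unfolding tl2_def by (intro sums_of_real summable_sums tl2_eq(1)[OF tsm])
    ultimately show ?thesis unfolding Nfmm using sums_unique2 by metis
  qed
  have offS: "F (GF S u) (Suc (mm j)) = 0" for j
  proof -
    let ?m = "Suc (mm j)"
    have notS: "?m \<notin> S"
    proof
      assume "?m \<in> S"
      then obtain k where k: "?m = mm k" unfolding S_def by blast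
      have "mm j < mm k" using k by simp
      hence "j < k" using strict_mono_less[OF smm] by blast
      hence "Suc j \<le> k" by simp
      hence "mm (Suc j) \<le> mm k" using strict_mono_less_eq[OF smm] by blast
      thus False using mmS[of j] k by simp
    qed
    have "(\<lambda>i. F (delta i) ?m * cnj ((\<lambda>i. 0) i)) sums F (GF S u) ?m"
    proof (rule LOC[OF F D0 D _ gH])
      show "summable (\<lambda>i. (cmod ((\<lambda>i. 0::complex) i))\<^sup>2)" by simp
      show "\<forall>y. HA y \<longrightarrow> GF S u y ?m = (\<Sum>i. (\<lambda>i. 0) i * y i ?m)" using notS unfolding GF_def by simp
    qed
    hence "(\<lambda>i. 0::complex) sums F (GF S u) ?m" by simp
    thus ?thesis by (simp add: sums_iff)
  qed
  from FA have "(\<lambda>n. cmod (F (GF S u) (Suc n) - F (GF S u) n)) \<longlonglongrightarrow> 0" unfolding inA_def by blast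
  from LIMSEQ_D[OF this e] obtain N where N: "\<forall>n\<ge>N. norm (cmod (F (GF S u) (Suc n) - F (GF S u) n) - 0) < e" by blast
  have "mm N \<ge> N" using strict_mono_imp_increasing[OF smm] .
  hence "cmod (F (GF S u) (Suc (mm N)) - F (GF S u) (mm N)) < e" using N by fastforce
  moreover have "cmod (F (GF S u) (Suc (mm N)) - F (GF S u) (mm N)) = tl2 (t (mm N)) (KK N)"
    unfolding offS onS using tl2_nonneg[OF tsm tnn] by simp
  ultimately show False using tlj[of N] by simp
qed

lemma HA_x:
  assumes F: "Hbidual F" and D0: "D \<ge> 0" and D: "\<forall>f. Hdual f \<longrightarrow> (\<forall>m. cmod (F f m) \<le> D * dual_norm f)"
  shows "HA (\<lambda>i m. cnj (F (delta i) m))"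
proof (rule HA_intro)
  show "\<forall>i. inA (\<lambda>m. cnj (F (delta i) m))"
    using Hbidual_inA[OF F Hdual_delta] inA_cnj by blast
  show "uc (\<lambda>i m. cnj (F (delta i) m))" unfolding uc_def
  proof (intro allI impI)
    fix e :: real assume e: "e > 0"
    obtain N0 where N0: "\<forall>m. tl2 (\<lambda>i. (cmod (F (delta i) m))\<^sup>2) N0 \<le> e"
      using unif_tail[OF F D0 D e] by blast
    have "(\<Sum>i\<in>{N0..<M}. (cmod (cnj (F (delta i) n)))\<^sup>2) \<le> e" if "N0 \<le> M" for n M
    proof -
      have "(\<Sum>i\<in>{N0..<M}. (cmod (F (delta i) n))\<^sup>2) \<le> tl2 (\<lambda>i. (cmod (F (delta i) n))\<^sup>2) N0"
        by (rule seg_le_tl2[OF wbound(1)[OF F D0 D] _ that]) simp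
      thus ?thesis using N0[rule_format, of n] by simp
    qed
    thus "\<exists>N. \<forall>n M. N \<le> M \<longrightarrow> (\<Sum>i = N..<M. (cmod (cnj (F (delta i) n)))\<^sup>2) \<le> e" by blast
  qed
qed

theorem theorem6p1:
  shows "\<forall>F. Hbidual F \<longrightarrow>
           (\<exists>x. HA x \<and> (\<forall>f. Hdual f \<longrightarrow> F f = (\<lambda>n. cnj (f x n))))"
proof (intro allI impI)
  fix F assume F: "Hbidual F"
  obtain D where D0: "D \<ge> 0" and D: "\<forall>f. Hdual f \<longrightarrow> (\<forall>m. cmod (F f m) \<le> D * dual_norm f)"
    using Hbidual_bound[OF F] by blast
  define x where "x = (\<lambda>i m. cnj (F (delta i) m))"
  have x: "HA x" unfolding x_def by (rule HA_x[OF F D0 D])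
  have "F f = (\<lambda>n. cnj (f x n))" if f: "Hdual f" for f
  proof
    fix n
    obtain C where C0: "C \<ge> 0" and C: "\<forall>x. HA x \<longrightarrow> supn (f x) \<le> C * Hnorm x"
      using Hdual_bound[OF f] by blast
    have v: "summable (\<lambda>i. (cmod (f (epsv i) n))\<^sup>2)" by (rule phi_bound(1)[OF f C0 C])
    have "(\<lambda>i. F (delta i) n * cnj (f (epsv i) n)) sums F f n"
    proof (rule LOC[OF F D0 D v f])
      show "\<forall>y. HA y \<longrightarrow> f y n = (\<Sum>i. f (epsv i) n * y i n)"
        using f_sums[OF f] sums_unique by blast
    qed
    moreover have "(\<lambda>i. f (epsv i) n * x i n) sums f x n" by (rule f_sums[OF f x])
    hence "(\<lambda>i. cnj (f (epsv i) n * x i n)) sums cnj (f x n)" by (simp only: sums_cnj)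
    hence "(\<lambda>i. F (delta i) n * cnj (f (epsv i) n)) sums cnj (f x n)"
      unfolding x_def by (simp add: mult.commute)
    ultimately show "F f n = cnj (f x n)" using sums_unique2 by blast
  qed
  thus "\<exists>x. HA x \<and> (\<forall>f. Hdual f \<longrightarrow> F f = (\<lambda>n. cnj (f x n)))" using x by blast
qed

end
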